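(* Let $f\in\mathbb{R}\{x_1,\dots,x_n\}$ be a convergent power series defining a real analytic function on a sufficiently small open neighborhood $X_{\mathbb{R}}$ of $0\in\mathbb{R}^n$, and write $f=\sum_{k\ge d}f_k$ with $f_k$ homogeneous of degree $k$ and $f_d\neq0$. Assume $f$ has an isolated zero of simple type at $0$, i.e. the equation $f_d=0$ has no solution in $\mathbb{R}^n\setminus\{0\}$ (and $f(0)=0$). Then for every $\alpha\in\mathbb{Q}_{>0}$, $$\mathcal{J}(X_{\mathbb{R}},f^{\alpha})_0=\mathfrak{m}_0^{[\alpha d]-n+1},$$ the set of real jumping numbers of $f$ is $\{k/d: k\in\mathbb{Z},\ k\ge n\}$, and $\mathrm{rlct}(f)=n/d$.
   Context: $\mathfrak{m}_0$ is the maximal ideal of the ring $\mathcal{O}_{X_{\mathbb{R}},0}$ of germs of real analytic functions at $0$, with the convention $\mathfrak{m}_0^k=\mathcal{O}_{X_{\mathbb{R}},0}$ for $k\le0$; $[\cdot]$ is the integer part. For $\alpha\in\mathbb{Q}_{>0}$ the real multiplier ideal $\mathcal{J}(X_{\mathbb{R}},f^{\alpha})$ has stalk at $x$ consisting of real analytic germs $g$ such that $|g|/|f|^{\alpha}$ is locally integrable near $x$. Real jumping numbers are the $\alpha>0$ with $\mathcal{J}(X_{\mathbb{R}},f^{\alpha-\varepsilon})\ne\mathcal{J}(X_{\mathbb{R}},f^{\alpha})$ for all $0<\varepsilon\ll1$, and $\mathrm{rlct}(f)$ is the smallest of them (the smallest $\alpha$ with $|f|^{-\alpha}$ not locally integrable).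 *)

theory Defs
  imports "HOL-Analysis.Analysis"
begin

definition mono :: "real^'n \<Rightarrow> ('n \<Rightarrow> nat) \<Rightarrow> real" where
  "mono x \<beta> = (\<Prod>i\<in>UNIV. (x $ i) ^ (\<beta> i))"

definition mdeg :: "('n::finite \<Rightarrow> nat) \<Rightarrow> nat" where
  "mdeg \<beta> = (\<Sum>i\<in>UNIV. \<beta> i)"

definition pseries_rep :: "(('n::finite \<Rightarrow> nat) \<Rightarrow> real) \<Rightarrow> (real^'n \<Rightarrow> real) \<Rightarrow> bool" where
  "pseries_rep c g \<longleftrightarrow> (\<exists>r>0. \<forall>x\<in>ball 0 r. ((\<lambda>\<beta>. c \<beta> * mono x \<beta>) has_sum g x) UNIV)"

definition analytic_germ0 :: "(real^'n::finite \<Rightarrow> real) \<Rightarrow> bool" where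
  "analytic_germ0 g \<longleftrightarrow> (\<exists>c. pseries_rep c g)"

definition hom_part :: "(('n::finite \<Rightarrow> nat) \<Rightarrow> real) \<Rightarrow> nat \<Rightarrow> real^'n \<Rightarrow> real" where
  "hom_part c k x = (\<Sum>\<beta>\<in>{\<beta>. mdeg \<beta> = k}. c \<beta> * mono x \<beta>)"

text \<open>m_0^k: germs whose power series has no terms of degree < k
  (for k <= 0 this is all of O_{X_R,0}).\<close>
definition maxideal_pow :: "int \<Rightarrow> (real^'n::finite \<Rightarrow> real) set" where
  "maxideal_pow k = {g. \<exists>c. pseries_rep c g \<and> (\<forall>\<beta>. int (mdeg \<beta>) < k \<longrightarrow> c \<beta> = 0)}"

definition loc_integrable0 :: "(real^'n::finite \<Rightarrow> real) \<Rightarrow> bool" where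
  "loc_integrable0 h \<longleftrightarrow> (\<exists>U. open U \<and> 0 \<in> U \<and> h absolutely_integrable_on U)"

definition mult_ideal0 :: "(real^'n::finite \<Rightarrow> real) \<Rightarrow> real \<Rightarrow> (real^'n \<Rightarrow> real) set" where
  "mult_ideal0 f \<alpha> = {g. analytic_germ0 g \<and> loc_integrable0 (\<lambda>x. \<bar>g x\<bar> / \<bar>f x\<bar> powr \<alpha>)}"

definition jumping_numbers0 :: "(real^'n::finite \<Rightarrow> real) \<Rightarrow> real set" where
  "jumping_numbers0 f = {\<alpha>. \<alpha> > 0 \<and>
     (\<exists>e0>0. \<forall>e. 0 < e \<and> e < e0 \<longrightarrow> mult_ideal0 f (\<alpha> - e) \<noteq> mult_ideal0 f \<alpha>)}"

definition rlct :: "(real^'n::finite \<Rightarrow> real) \<Rightarrow> real" where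
  "rlct f = Inf {\<alpha>. \<alpha> > 0 \<and> \<not> loc_integrable0 (\<lambda>x. 1 / \<bar>f x\<bar> powr \<alpha>)}"

end

theory Submission
  imports Defs
begin


lemma finite_mdeg_le: "finite {\<beta>::'n::finite \<Rightarrow> nat. mdeg \<beta> \<le> K}"
proof -
  have "{\<beta>::'n \<Rightarrow> nat. mdeg \<beta> \<le> K} \<subseteq> PiE UNIV (\<lambda>_. {..K})"
  proof
    fix \<beta> :: "'n \<Rightarrow> nat" assume "\<beta> \<in> {\<beta>. mdeg \<beta> \<le> K}"
    then have "\<beta> i \<le> K" for i
      unfolding mdeg_def using member_le_sum[of i UNIV \<beta>] by auto
    then show "\<beta> \<in> PiE UNIV (\<lambda>_. {..K})" by (auto simp: PiE_def Pi_def extensional_def)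
  qed
  then show ?thesis by (rule finite_subset) (simp add: finite_PiE)
qed

lemma finite_mdeg_less: "finite {\<beta>::'n::finite \<Rightarrow> nat. mdeg \<beta> < K}"
  by (rule finite_subset[OF _ finite_mdeg_le[of K]]) auto

lemma finite_mdeg_eq: "finite {\<beta>::'n::finite \<Rightarrow> nat. mdeg \<beta> = K}"
  by (rule finite_subset[OF _ finite_mdeg_le[of K]]) auto

lemma mono_abs_le: "\<bar>mono (x::real^'n::finite) \<beta>\<bar> \<le> norm x ^ mdeg \<beta>"
proof -
  have "\<bar>mono x \<beta>\<bar> = (\<Prod>i\<in>UNIV. \<bar>x $ i\<bar> ^ \<beta> i)"
    unfolding mono_def by (simp add: abs_prod power_abs)
  also have "\<dots> \<le> (\<Prod>i\<in>UNIV. norm x ^ \<beta> i)"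
    by (intro prod_mono conjI power_mono) (auto simp: component_le_norm_cart)
  also have "\<dots> = norm x ^ mdeg \<beta>" unfolding mdeg_def by (simp add: power_sum)
  finally show ?thesis .
qed

lemma mono_scale: "mono (t *\<^sub>R (x::real^'n::finite)) \<beta> = t ^ mdeg \<beta> * mono x \<beta>"
  unfolding mono_def mdeg_def by (simp add: power_mult_distrib prod.distrib power_sum)

lemma mono_const: "mono ((\<chi> i. a)::real^'n::finite) \<beta> = a ^ mdeg \<beta>"
  unfolding mono_def mdeg_def by (simp add: power_sum)

lemma hom_part_scale: "hom_part c k (t *\<^sub>R x) = t ^ k * hom_part c k x"
  unfolding hom_part_def by (simp add: mono_scale sum_distrib_left algebra_simps)

lemma continuous_mono: "continuous_on S (\<lambda>x::real^'n::finite. mono x \<beta>)"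
  unfolding mono_def by (intro continuous_intros)

lemma continuous_hom_part: "continuous_on S (hom_part c k)"
  unfolding hom_part_def by (intro continuous_intros continuous_on_mult continuous_on_const continuous_mono)

lemma pseries_tail:
  fixes g :: "real^'n::finite \<Rightarrow> real"
  assumes "pseries_rep c g"
  obtains \<rho> A where "\<rho> > 0" "A \<ge> 0"
    "\<And>x. norm x \<le> \<rho> \<Longrightarrow> ((\<lambda>\<beta>. c \<beta> * mono x \<beta>) has_sum g x) UNIV"
    "\<And>K x. norm x \<le> \<rho> \<Longrightarrow>
        \<bar>g x - (\<Sum>\<beta>\<in>{\<beta>. mdeg \<beta> < K}. c \<beta> * mono x \<beta>)\<bar> \<le> A * (norm x / \<rho>) ^ K"
proof -
  obtain r where r: "r > 0" "\<And>x. x \<in> ball 0 r \<Longrightarrow> ((\<lambda>\<beta>. c \<beta> * mono x \<beta>) has_sum g x) UNIV"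
    using assms unfolding pseries_rep_def by blast
  define N where "N = real CARD('n)"
  have N: "N \<ge> 1" unfolding N_def by simp
  define \<rho> where "\<rho> = r / (2 * N)"
  have \<rho>: "\<rho> > 0" "\<rho> \<le> r / 2" using r N unfolding \<rho>_def by (auto simp: field_simps)
  define y :: "real^'n" where "y = (\<chi> i. \<rho>)"
  have "norm y \<le> (\<Sum>i\<in>UNIV. \<bar>y $ i\<bar>)" by (rule norm_le_l1_cart)
  also have "\<dots> = N * \<rho>" unfolding y_def N_def using \<rho> by simp
  also have "\<dots> = r / 2" unfolding \<rho>_def using N by simp
  finally have "y \<in> ball 0 r" using r by simp
  from r(2)[OF this] have "(\<lambda>\<beta>. c \<beta> * \<rho> ^ mdeg \<beta>) summable_on UNIV"
    unfolding y_def mono_const by (auto dest: has_sum_imp_summable)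
  then have "(\<lambda>\<beta>. norm (c \<beta> * \<rho> ^ mdeg \<beta>)) summable_on UNIV"
    by (rule summable_on_iff_abs_summable_on_real[THEN iffD1])
  moreover have "(\<lambda>\<beta>. norm (c \<beta> * \<rho> ^ mdeg \<beta>)) = (\<lambda>\<beta>. \<bar>c \<beta>\<bar> * \<rho> ^ mdeg \<beta>)"
    using \<rho> by (auto simp: abs_mult)
  ultimately have sw: "(\<lambda>\<beta>. \<bar>c \<beta>\<bar> * \<rho> ^ mdeg \<beta>) summable_on UNIV" by simp
  define A where "A = infsum (\<lambda>\<beta>. \<bar>c \<beta>\<bar> * \<rho> ^ mdeg \<beta>) UNIV"
  have A: "A \<ge> 0" unfolding A_def using \<rho> by (intro infsum_nonneg) auto
  have hs: "((\<lambda>\<beta>. c \<beta> * mono x \<beta>) has_sum g x) UNIV" if "norm x \<le> \<rho>" for x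
    using r(2)[of x] that \<rho> r by auto
  show thesis
  proof (rule that[OF \<rho>(1) A hs])
    fix K x assume x: "norm (x::real^'n) \<le> \<rho>"
    define L where "L = {\<beta>::'n\<Rightarrow>nat. mdeg \<beta> < K}"
    have fL: "finite L" unfolding L_def by (rule finite_mdeg_less)
    define q where "q = (norm x / \<rho>) ^ K"
    have q: "q \<ge> 0" unfolding q_def using \<rho> by simp
    define \<phi> where "\<phi> = (\<lambda>\<beta>. if \<beta> \<in> L then 0 else c \<beta> * mono x \<beta>)"
    have h1: "((\<lambda>\<beta>. if \<beta> \<in> L then c \<beta> * mono x \<beta> else 0) has_sum (\<Sum>\<beta>\<in>L. c \<beta> * mono x \<beta>)) UNIV"
      by (rule has_sum_finite_neutralI[OF fL]) auto
    have h\<phi>: "(\<phi> has_sum (g x - (\<Sum>\<beta>\<in>L. c \<beta> * mono x \<beta>))) UNIV"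
    proof -
      have e: "(\<lambda>\<beta>. c \<beta> * mono x \<beta> + - (if \<beta> \<in> L then c \<beta> * mono x \<beta> else 0)) = \<phi>"
        unfolding \<phi>_def by (auto simp: fun_eq_iff)
      show ?thesis using has_sum_add[OF hs[OF x] has_sum_uminusI[OF h1]] unfolding e by simp
    qed
    have hw: "((\<lambda>\<beta>. q * (\<bar>c \<beta>\<bar> * \<rho> ^ mdeg \<beta>)) has_sum q * A) UNIV"
      unfolding A_def by (intro has_sum_cmult_right has_sum_infsum sw)
    have bnd: "\<bar>\<phi> \<beta>\<bar> \<le> q * (\<bar>c \<beta>\<bar> * \<rho> ^ mdeg \<beta>)" for \<beta>
    proof (cases "\<beta> \<in> L")
      case True then show ?thesis using q \<rho> unfolding \<phi>_def by simp
    next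
      case False
      then have K: "K \<le> mdeg \<beta>" unfolding L_def by simp
      have t: "norm x / \<rho> \<le> 1" "norm x / \<rho> \<ge> 0" using x \<rho> by auto
      have "\<bar>mono x \<beta>\<bar> \<le> norm x ^ mdeg \<beta>" by (rule mono_abs_le)
      also have "\<dots> = \<rho> ^ mdeg \<beta> * (norm x / \<rho>) ^ mdeg \<beta>" using \<rho> by (simp add: power_divide)
      also have "\<dots> \<le> \<rho> ^ mdeg \<beta> * q" unfolding q_def
        using \<rho> t K by (intro mult_left_mono power_decreasing) auto
      finally have "\<bar>c \<beta>\<bar> * \<bar>mono x \<beta>\<bar> \<le> \<bar>c \<beta>\<bar> * (\<rho> ^ mdeg \<beta> * q)"
        by (intro mult_left_mono) auto
      then show ?thesis using False unfolding \<phi>_def by (simp add: abs_mult algebra_simps)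
    qed
    have bnd2: "- (q * (\<bar>c \<beta>\<bar> * \<rho> ^ mdeg \<beta>)) \<le> \<phi> \<beta>" "\<phi> \<beta> \<le> q * (\<bar>c \<beta>\<bar> * \<rho> ^ mdeg \<beta>)" for \<beta>
      using bnd[of \<beta>] by arith+
    have "g x - (\<Sum>\<beta>\<in>L. c \<beta> * mono x \<beta>) \<le> q * A"
      by (rule has_sum_mono[OF h\<phi> hw]) (use bnd2 in auto)
    moreover have "- (q * A) \<le> g x - (\<Sum>\<beta>\<in>L. c \<beta> * mono x \<beta>)"
      by (rule has_sum_mono[OF has_sum_uminusI[OF hw] h\<phi>]) (use bnd2 in auto)
    ultimately show "\<bar>g x - (\<Sum>\<beta>\<in>{\<beta>. mdeg \<beta> < K}. c \<beta> * mono x \<beta>)\<bar> \<le> A * (norm x / \<rho>) ^ K"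
      unfolding L_def q_def by (simp add: abs_le_iff algebra_simps)
  qed
qed



lemma sum_low_hom:
  assumes "\<forall>\<beta>. mdeg \<beta> < d \<longrightarrow> c \<beta> = 0"
  shows "(\<Sum>\<beta>\<in>{\<beta>::'n::finite\<Rightarrow>nat. mdeg \<beta> < Suc d}. c \<beta> * mono x \<beta>) = hom_part c d x"
  unfolding hom_part_def
  by (rule sum.mono_neutral_right[OF finite_mdeg_less]) (use assms in auto)

lemma sum_low_zero:
  assumes "\<forall>\<beta>. mdeg \<beta> < d \<longrightarrow> c \<beta> = 0"
  shows "(\<Sum>\<beta>\<in>{\<beta>::'n::finite\<Rightarrow>nat. mdeg \<beta> < d}. c \<beta> * mono x \<beta>) = 0"
  using assms by simp

lemma hom_part_lower:
  fixes c :: "('n::finite \<Rightarrow> nat) \<Rightarrow> real"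
  assumes simple: "\<forall>x. x \<noteq> 0 \<longrightarrow> hom_part c d x \<noteq> 0" and dpos: "d > 0"
  obtains m where "m > 0" "\<And>x. m * norm x ^ d \<le> \<bar>hom_part c d x\<bar>"
proof -
  obtain i :: 'n where True by blast
  have ne: "sphere (0::real^'n) 1 \<noteq> {}"
    using norm_axis_1[of i] by (auto simp: sphere_def intro!: exI[of _ "axis i 1"])
  have "continuous_on (sphere 0 1) (\<lambda>x. \<bar>hom_part c d x\<bar>)"
    by (intro continuous_intros continuous_hom_part)
  from continuous_attains_inf[OF compact_sphere ne this]
  obtain u where u: "u \<in> sphere 0 1" "\<And>y. y \<in> sphere 0 1 \<Longrightarrow> \<bar>hom_part c d u\<bar> \<le> \<bar>hom_part c d y\<bar>"
    by blast
  have "u \<noteq> 0" using u(1) by auto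
  then have m: "\<bar>hom_part c d u\<bar> > 0" using simple by auto
  show thesis
  proof (rule that[OF m])
    fix x :: "real^'n"
    show "\<bar>hom_part c d u\<bar> * norm x ^ d \<le> \<bar>hom_part c d x\<bar>"
    proof (cases "x = 0")
      case True
      then show ?thesis using dpos by (simp add: power_0_left)
    next
      case False
      define y where "y = (1 / norm x) *\<^sub>R x"
      have y: "y \<in> sphere 0 1" using False unfolding y_def by auto
      have x: "x = norm x *\<^sub>R y" using False unfolding y_def by auto
      have "\<bar>hom_part c d x\<bar> = norm x ^ d * \<bar>hom_part c d y\<bar>"
        by (subst x, subst hom_part_scale) (simp add: abs_mult)
      also have "\<dots> \<ge> norm x ^ d * \<bar>hom_part c d u\<bar>"
        by (intro mult_left_mono u(2)[OF y]) auto
      finally show ?thesis by (simp add: mult.commute)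
    qed
  qed
qed

lemma f_bounds:
  fixes f :: "real^'n::finite \<Rightarrow> real"
  assumes rep: "pseries_rep c f"
    and lower_zero: "\<forall>\<beta>. mdeg \<beta> < d \<longrightarrow> c \<beta> = 0"
    and simple: "\<forall>x. x \<noteq> 0 \<longrightarrow> hom_part c d x \<noteq> 0"
    and dpos: "d > 0"
  obtains r m M where "r > 0" "m > 0" "M > 0"
    "\<And>x. norm x \<le> r \<Longrightarrow> m * norm x ^ d \<le> \<bar>f x\<bar> \<and> \<bar>f x\<bar> \<le> M * norm x ^ d"
proof -
  obtain \<rho> A where \<rho>: "\<rho> > 0" "A \<ge> 0"
    and tail: "\<And>K x. norm x \<le> \<rho> \<Longrightarrow>
        \<bar>f x - (\<Sum>\<beta>\<in>{\<beta>. mdeg \<beta> < K}. c \<beta> * mono x \<beta>)\<bar> \<le> A * (norm x / \<rho>) ^ K"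
    using pseries_tail[OF rep] by metis
  obtain m0 where m0: "m0 > 0" "\<And>x. m0 * norm x ^ d \<le> \<bar>hom_part c d x\<bar>"
    using hom_part_lower[OF simple dpos] by blast
  define r where "r = min \<rho> (m0 * \<rho> ^ Suc d / (2 * (A + 1)))"
  have r: "r > 0" "r \<le> \<rho>" unfolding r_def using \<rho> m0 by auto
  define M where "M = (A + 1) / \<rho> ^ d"
  have M: "M > 0" unfolding M_def using \<rho> by auto
  show thesis
  proof (rule that[OF r(1) _ M])
    show "m0 / 2 > 0" using m0 by simp
    fix x :: "real^'n" assume x: "norm x \<le> r"
    then have xr: "norm x \<le> \<rho>" using r by simp
    have t1: "\<bar>f x - hom_part c d x\<bar> \<le> A * (norm x / \<rho>) ^ Suc d"
      using tail[OF xr, of "Suc d"] unfolding sum_low_hom[OF lower_zero] .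
    have t2: "\<bar>f x\<bar> \<le> A * (norm x / \<rho>) ^ d"
      using tail[OF xr, of d] lower_zero by simp
    have "A * (norm x / \<rho>) ^ Suc d = (A * norm x / \<rho> ^ Suc d) * norm x ^ d"
      by (simp add: power_divide field_simps)
    also have "\<dots> \<le> (m0 / 2) * norm x ^ d"
    proof (intro mult_right_mono)
      have "A * norm x \<le> (A + 1) * r" using x \<rho> by (intro mult_mono) auto
      also have "\<dots> \<le> (A + 1) * (m0 * \<rho> ^ Suc d / (2 * (A + 1)))"
        unfolding r_def using \<rho> by (intro mult_left_mono) auto
      also have "\<dots> = m0 / 2 * \<rho> ^ Suc d" using \<rho> by (simp add: field_simps)
      finally show "A * norm x / \<rho> ^ Suc d \<le> m0 / 2" using \<rho> by (simp add: field_simps)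
    qed auto
    finally have t3: "A * (norm x / \<rho>) ^ Suc d \<le> m0 / 2 * norm x ^ d" .
    have "m0 / 2 * norm x ^ d \<le> \<bar>f x\<bar>" using t1 t3 m0(2)[of x] by linarith
    moreover have "\<bar>f x\<bar> \<le> M * norm x ^ d"
    proof -
      have "A * (norm x / \<rho>) ^ d \<le> (A + 1) * (norm x / \<rho>) ^ d"
        by (intro mult_right_mono) (use \<rho> in auto)
      also have "\<dots> = M * norm x ^ d" unfolding M_def by (simp add: power_divide)
      finally show ?thesis using t2 by linarith
    qed
    ultimately show "m0 / 2 * norm x ^ d \<le> \<bar>f x\<bar> \<and> \<bar>f x\<bar> \<le> M * norm x ^ d" by blast
  qed
qed



lemma digits_bound:
  fixes a :: "nat \<Rightarrow> nat"
  assumes "\<forall>j<n. a j < B"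
  shows "(\<Sum>j<n. a j * B ^ j) < B ^ n"
  using assms
proof (induction n)
  case 0 then show ?case by simp
next
  case (Suc n)
  then have IH: "(\<Sum>j<n. a j * B ^ j) < B ^ n" and an: "a n < B" by auto
  have "(\<Sum>j<Suc n. a j * B ^ j) = (\<Sum>j<n. a j * B ^ j) + a n * B ^ n" by simp
  also have "\<dots> < B ^ n + a n * B ^ n" using IH by simp
  also have "\<dots> = (a n + 1) * B ^ n" by simp
  also have "\<dots> \<le> B * B ^ n" using an by (intro mult_right_mono) auto
  finally show ?case by simp
qed

lemma digits_inj:
  fixes a b :: "nat \<Rightarrow> nat"
  assumes "\<forall>j<n. a j < B" "\<forall>j<n. b j < B" "(\<Sum>j<n. a j * B ^ j) = (\<Sum>j<n. b j * B ^ j)"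
  shows "\<forall>j<n. a j = b j"
  using assms
proof (induction n)
  case 0 then show ?case by simp
next
  case (Suc n)
  have Sa: "(\<Sum>j<n. a j * B ^ j) < B ^ n" using Suc.prems by (intro digits_bound) auto
  have Sb: "(\<Sum>j<n. b j * B ^ j) < B ^ n" using Suc.prems by (intro digits_bound) auto
  have Bn: "B ^ n > 0" using Sa by linarith
  have eq: "(\<Sum>j<n. a j * B ^ j) + a n * B ^ n = (\<Sum>j<n. b j * B ^ j) + b n * B ^ n"
    using Suc.prems(3) by simp
  have "((\<Sum>j<n. a j * B ^ j) + a n * B ^ n) div B ^ n = a n"
    using Sa Bn by simp
  moreover have "((\<Sum>j<n. b j * B ^ j) + b n * B ^ n) div B ^ n = b n"
    using Sb Bn by simp
  ultimately have an: "a n = b n" using eq by simp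
  have "((\<Sum>j<n. a j * B ^ j) + a n * B ^ n) mod B ^ n = (\<Sum>j<n. a j * B ^ j)"
    using Sa by simp
  moreover have "((\<Sum>j<n. b j * B ^ j) + b n * B ^ n) mod B ^ n = (\<Sum>j<n. b j * B ^ j)"
    using Sb by simp
  ultimately have "(\<Sum>j<n. a j * B ^ j) = (\<Sum>j<n. b j * B ^ j)" using eq by simp
  then have IH: "\<forall>j<n. a j = b j"
    by (intro Suc.IH) (use Suc.prems(1,2) in auto)
  show ?case
  proof (intro allI impI)
    fix j assume "j < Suc n"
    then have "j < n \<or> j = n" by linarith
    then show "a j = b j" using IH an by blast
  qed
qed

lemma hom_part_nonzero:
  fixes c :: "('n::finite \<Rightarrow> nat) \<Rightarrow> real"
  assumes "mdeg \<beta>0 = k" "c \<beta>0 \<noteq> 0"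
  shows "\<exists>u. hom_part c k u \<noteq> 0"
proof -
  define n where "n = CARD('n)"
  obtain e :: "'n \<Rightarrow> nat" where e: "bij_betw e UNIV {0..<n}"
    using ex_bij_betw_finite_nat[of "UNIV :: 'n set"] unfolding n_def by auto
  define h where "h = inv_into UNIV e"
  have he: "h (e i) = i" for i
    unfolding h_def using e by (simp add: bij_betw_def inv_into_f_f)
  define B where "B = Suc k"
  define E where "E = (\<lambda>\<beta>::'n\<Rightarrow>nat. \<Sum>i\<in>UNIV. \<beta> i * B ^ e i)"
  define S where "S = {\<beta>::'n\<Rightarrow>nat. mdeg \<beta> = k}"
  have fS: "finite S" unfolding S_def by (rule finite_mdeg_eq)
  have Ealt: "E \<beta> = (\<Sum>j<n. \<beta> (h j) * B ^ j)" for \<beta>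
  proof -
    have "(\<Sum>j\<in>{0..<n}. \<beta> (h j) * B ^ j) = (\<Sum>i\<in>UNIV. \<beta> (h (e i)) * B ^ e i)"
      by (rule sum.reindex_bij_betw[OF e, symmetric])
    then show ?thesis unfolding E_def he by (simp add: atLeast0LessThan)
  qed
  have small: "\<beta> i < B" if "\<beta> \<in> S" for \<beta> i
    using that member_le_sum[of i UNIV \<beta>] unfolding S_def mdeg_def B_def by auto
  have Einj: "\<beta> = \<beta>'" if "\<beta> \<in> S" "\<beta>' \<in> S" "E \<beta> = E \<beta>'" for \<beta> \<beta>'
  proof
    fix i
    have p1: "\<forall>j<n. \<beta> (h j) < B" using small that(1) by blast
    have p2: "\<forall>j<n. \<beta>' (h j) < B" using small that(2) by blast
    have p3: "(\<Sum>j<n. \<beta> (h j) * B ^ j) = (\<Sum>j<n. \<beta>' (h j) * B ^ j)"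
      using that(3) by (simp only: Ealt)
    have A: "\<forall>j<n. \<beta> (h j) = \<beta>' (h j)" by (rule digits_inj[OF p1 p2 p3])
    have "e i < n" using e by (auto simp: bij_betw_def)
    with A have "\<beta> (h (e i)) = \<beta>' (h (e i))" by blast
    then show "\<beta> i = \<beta>' i" by (simp add: he)
  qed
  define Dg where "Dg = B ^ n"
  have ED: "E \<beta> \<le> Dg" if "\<beta> \<in> S" for \<beta>
    unfolding Ealt Dg_def using digits_bound[of n "\<lambda>j. \<beta> (h j)" B] small[OF that] by auto
  define a where "a = (\<lambda>m. \<Sum>\<beta>\<in>{\<beta>\<in>S. E \<beta> = m}. c \<beta>)"
  define xt where "xt = (\<lambda>t::real. (\<chi> i. t ^ (B ^ e i)) :: real^'n)"
  have mono_xt: "mono (xt t) \<beta> = t ^ E \<beta>" for t \<beta>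
  proof -
    have "mono (xt t) \<beta> = (\<Prod>i\<in>UNIV. t ^ (\<beta> i * B ^ e i))"
      unfolding mono_def xt_def by (intro prod.cong refl) (simp, metis mult.commute power_mult)
    also have "\<dots> = t ^ E \<beta>" unfolding E_def by (rule power_sum[symmetric])
    finally show ?thesis .
  qed
  have hp: "hom_part c k (xt t) = (\<Sum>m\<le>Dg. a m * t ^ m)" for t
  proof -
    have "hom_part c k (xt t) = (\<Sum>\<beta>\<in>S. c \<beta> * t ^ E \<beta>)"
      unfolding hom_part_def S_def mono_xt ..
    also have "\<dots> = (\<Sum>m\<le>Dg. (\<Sum>\<beta>\<in>{\<beta>\<in>S. E \<beta> = m}. c \<beta> * t ^ E \<beta>))"
      by (rule sum.group[symmetric]) (use fS ED in auto)
    also have "\<dots> = (\<Sum>m\<le>Dg. a m * t ^ m)"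
      unfolding a_def sum_distrib_right by (intro sum.cong refl) auto
    finally show ?thesis .
  qed
  have b0: "\<beta>0 \<in> S" using assms unfolding S_def by simp
  have "{\<beta>\<in>S. E \<beta> = E \<beta>0} = {\<beta>0}" using Einj b0 by auto
  then have "a (E \<beta>0) = c \<beta>0" unfolding a_def by simp
  moreover have "E \<beta>0 \<le> Dg" using ED b0 .
  ultimately have "\<not> (\<forall>i\<le>Dg. a i = 0)" using assms by auto
  then obtain t where "(\<Sum>m\<le>Dg. a m * t ^ m) \<noteq> 0"
    using polyfun_eq_0[where n=Dg and c=a] by auto
  then show ?thesis using hp by metis
qed



lemma half_powr:
  assumes "(a::real) > 0" shows "(a/2) powr (-t) = 2 powr t * a powr (-t)"
proof -
  have "(a/2) powr (-t) = a powr (-t) / 2 powr (-t)" using assms by (auto intro: powr_divide)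
  also have "2 powr (-t) = inverse (2 powr t)" by (rule powr_minus)
  finally show ?thesis by (simp add: field_simps)
qed

lemma emeasure_leb_ball:
  fixes a :: "real^'n::finite"
  assumes r: "r \<ge> 0"
  shows "emeasure lebesgue (ball a r) = ennreal (unit_ball_vol (real CARD('n)) * r ^ CARD('n))"
proof -
  have "ball a r \<in> sets lborel" by simp
  then have "emeasure lebesgue (ball a r) = emeasure lborel (ball a r)" by simp
  also have "\<dots> = ennreal (unit_ball_vol (real CARD('n)) * r ^ CARD('n))"
    using emeasure_ball[where c=a and r=r, OF r] by simp
  finally show ?thesis .
qed

lemma exists_shell:
  fixes R s :: real
  assumes "R > 0" "0 < s" "s < R"
  shows "\<exists>j. R / 2 ^ Suc j \<le> s \<and> s < R / 2 ^ j"
proof -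
  obtain N where N: "R / s < 2 ^ N" using real_arch_pow[of 2 "R / s"] by auto
  have PN: "R / 2 ^ N \<le> s" using N assms by (simp add: field_simps)
  define m where "m = (LEAST m. R / 2 ^ m \<le> s)"
  have Pm: "R / 2 ^ m \<le> s" unfolding m_def by (rule LeastI[of _ N]) (rule PN)
  have m0: "m \<noteq> 0"
  proof
    assume "m = 0" then show False using Pm assms by simp
  qed
  then obtain j where j: "m = Suc j" by (cases m) auto
  have "\<not> R / 2 ^ j \<le> s" using not_less_Least[of j "\<lambda>m. R / 2 ^ m \<le> s"] j unfolding m_def by auto
  then show ?thesis using Pm j by auto
qed

lemma upper_integrable:
  fixes h :: "real^'n::finite \<Rightarrow> real"
  assumes R: "R > 0" and C: "C \<ge> 0" and t: "0 \<le> t" "t < real CARD('n)"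
    and hb: "\<And>x. norm x < R \<Longrightarrow> x \<noteq> 0 \<Longrightarrow> \<bar>h x\<bar> \<le> C * norm x powr (- t)"
    and h0: "h 0 = 0"
    and meas: "(\<lambda>x. indicator (ball 0 R) x * h x) \<in> borel_measurable lebesgue"
  shows "h absolutely_integrable_on ball 0 R"
proof -
  define n where "n = CARD('n)"
  define V where "V = unit_ball_vol (real n)"
  have V: "V \<ge> 0" unfolding V_def by simp
  define A where "A = (\<lambda>j::nat. ball (0::real^'n) (R / 2 ^ j) - ball 0 (R / 2 ^ Suc j))"
  define b where "b = (\<lambda>j::nat. C * (R / 2 ^ Suc j) powr (- t))"
  have b0: "b j \<ge> 0" for j unfolding b_def using C by simp
  have Ameas: "A j \<in> sets lebesgue" for j unfolding A_def by simp
  have pw: "ennreal (norm (indicator (ball 0 R) x *\<^sub>R h x)) \<le> (\<Sum>j. ennreal (b j) * indicator (A j) x)"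
    for x
  proof (cases "x \<in> ball 0 R \<and> x \<noteq> 0")
    case False
    then have "norm (indicator (ball 0 R) x *\<^sub>R h x) = 0" using h0 by (auto simp: indicator_def)
    then have "ennreal (norm (indicator (ball 0 R) x *\<^sub>R h x)) = 0" by simp
    then show ?thesis by (metis zero_le)
  next
    case True
    then have xR: "norm x < R" "norm x > 0" by auto
    obtain j where j: "R / 2 ^ Suc j \<le> norm x" "norm x < R / 2 ^ j"
      using exists_shell[OF R xR(2,1)] by blast
    have xA: "x \<in> A j" unfolding A_def using j by auto
    have "norm (indicator (ball 0 R) x *\<^sub>R h x) = \<bar>h x\<bar>" using True by simp
    also have "\<dots> \<le> C * norm x powr (- t)" using hb xR by auto
    also have "\<dots> \<le> b j" unfolding b_def using C t j R
      by (intro mult_left_mono powr_mono2') auto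
    finally have "ennreal (norm (indicator (ball 0 R) x *\<^sub>R h x)) \<le> ennreal (b j) * indicator (A j) x"
      using xA by (simp add: ennreal_leI)
    also have "\<dots> = (\<Sum>i\<in>{j}. ennreal (b i) * indicator (A i) x)" by (metis add.right_neutral empty_iff finite.emptyI sum.empty sum.insert)
    also have "\<dots> \<le> (\<Sum>i. ennreal (b i) * indicator (A i) x)"
      by (rule sum_le_suminf) auto
    finally show ?thesis .
  qed
  define g where "g = (\<lambda>j::nat. b j * (V * (R / 2 ^ j) ^ n))"
  have g0: "g j \<ge> 0" for j unfolding g_def using b0 V R by simp
  have gsum: "summable g"
  proof (rule summable_ratio_test[of "2 powr t / 2 ^ n" 0])
    have "2 powr t < 2 powr (real n)" using t unfolding n_def by (intro powr_less_mono) auto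
    then show "2 powr t / 2 ^ n < 1" by (simp add: powr_realpow)
    fix j :: nat
    have e1: "(R / 2 ^ Suc (Suc j)) powr (- t) = 2 powr t * (R / 2 ^ Suc j) powr (- t)"
    proof -
      have "R / 2 ^ Suc (Suc j) = (R / 2 ^ Suc j) / 2" by simp
      then show ?thesis using R half_powr[of "R / 2 ^ Suc j" t] by simp
    qed
    have e2: "(R / 2 ^ Suc j) ^ n = (R / 2 ^ j) ^ n / 2 ^ n"
      by (simp add: power_divide power_mult_distrib field_simps)
    have "g (Suc j) = 2 powr t / 2 ^ n * g j"
      unfolding g_def b_def e1 e2 by (simp add: field_simps)
    then show "norm (g (Suc j)) \<le> 2 powr t / 2 ^ n * norm (g j)"
      using g0[of j] g0[of "Suc j"] by simp
  qed
  have "(\<integral>\<^sup>+x. ennreal (norm (indicator (ball 0 R) x *\<^sub>R h x)) \<partial>lebesgue)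
        \<le> (\<integral>\<^sup>+x. (\<Sum>j. ennreal (b j) * indicator (A j) x) \<partial>lebesgue)"
    by (rule nn_integral_mono) (rule pw)
  also have "\<dots> = (\<Sum>j. \<integral>\<^sup>+x. ennreal (b j) * indicator (A j) x \<partial>lebesgue)"
    by (rule nn_integral_suminf) (use Ameas in auto)
  also have "\<dots> = (\<Sum>j. ennreal (b j) * emeasure lebesgue (A j))"
    by (intro suminf_cong nn_integral_cmult_indicator Ameas)
  also have "\<dots> \<le> (\<Sum>j. ennreal (g j))"
  proof (intro suminf_le)
    fix j
    have "emeasure lebesgue (A j) \<le> emeasure lebesgue (ball (0::real^'n) (R / 2 ^ j))"
      unfolding A_def by (intro emeasure_mono) auto
    also have "\<dots> = ennreal (V * (R / 2 ^ j) ^ n)" unfolding V_def n_def using R by (intro emeasure_leb_ball) simp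
    finally have "ennreal (b j) * emeasure lebesgue (A j) \<le> ennreal (b j) * ennreal (V * (R / 2 ^ j) ^ n)"
      by (rule mult_left_mono) simp
    also have "\<dots> = ennreal (g j)" unfolding g_def by (subst ennreal_mult) (use b0[of j] V R in auto)
    finally show "ennreal (b j) * emeasure lebesgue (A j) \<le> ennreal (g j)" .
  qed auto
  also have "\<dots> < \<infinity>" using ennreal_suminf_neq_top[OF gsum g0] by (simp add: less_top)
  finally have fin: "(\<integral>\<^sup>+x. ennreal (norm (indicator (ball 0 R) x *\<^sub>R h x)) \<partial>lebesgue) < \<infinity>" .
  have "(\<lambda>x. indicator (ball 0 R) x *\<^sub>R h x) \<in> borel_measurable lebesgue" using meas by simp
  then have "integrable lebesgue (\<lambda>x. indicator (ball 0 R) x *\<^sub>R h x)"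
    using fin by (simp add: integrable_iff_bounded)
  then show ?thesis unfolding set_integrable_def .
qed



lemma ennreal_sum_const_top:
  assumes "\<And>i. t i \<ge> \<delta>" "\<delta> > (0::real)"
  shows "(\<Sum>i. ennreal (t i)) = \<infinity>"
proof (rule ccontr)
  assume "(\<Sum>i. ennreal (t i)) \<noteq> \<infinity>"
  then have "summable t" using assms by (intro summable_suminf_not_top) (auto intro: order_trans[of 0 \<delta>])
  then have "t \<longlonglongrightarrow> 0" by (rule summable_LIMSEQ_zero)
  then have "\<delta> \<le> 0" by (rule LIMSEQ_le_const) (use assms in auto)
  then show False using assms by simp
qed

lemma lower_not_integrable:
  fixes h :: "real^'n::finite \<Rightarrow> real" and u :: "real^'n"
  assumes u: "u \<noteq> 0" and \<rho>: "\<rho> > 0" "\<rho> \<le> norm u / 2" and \<kappa>: "\<kappa> > 0"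
    and e: "e + real CARD('n) \<le> 0"
    and hb: "\<exists>J. \<forall>j\<ge>J. \<forall>x\<in>ball (((1/4::real) ^ j) *\<^sub>R u) ((1/4) ^ j * \<rho>).
                  \<kappa> * ((1/4) ^ j) powr e \<le> \<bar>h x\<bar>"
  shows "\<not> loc_integrable0 h"
proof
  assume "loc_integrable0 h"
  then obtain U where U: "open U" "0 \<in> U" "h absolutely_integrable_on U"
    unfolding loc_integrable0_def by blast
  define n where "n = CARD('n)"
  define lam where "lam = (1/4::real)"
  have lam: "lam > 0" "lam < 1" unfolding lam_def by auto
  define T where "T = (\<lambda>j::nat. ball ((lam ^ j) *\<^sub>R u) (lam ^ j * \<rho>))"
  obtain J where J: "\<And>j x. j \<ge> J \<Longrightarrow> x \<in> T j \<Longrightarrow> \<kappa> * (lam ^ j) powr e \<le> \<bar>h x\<bar>"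
    using hb unfolding T_def lam_def by blast
  obtain \<epsilon> where \<epsilon>: "\<epsilon> > 0" "ball 0 \<epsilon> \<subseteq> U" using U open_contains_ball by blast
  have nu: "norm u > 0" using u by simp
  obtain J2 where J2: "lam ^ J2 < \<epsilon> / (2 * norm u)"
    using real_arch_pow_inv[of "\<epsilon> / (2 * norm u)" lam] lam \<epsilon> nu by auto
  define J' where "J' = max J J2"
  have normT: "(lam ^ j * norm u) / 2 < norm x \<and> norm x < 3 * (lam ^ j * norm u) / 2" if "x \<in> T j" for j x
  proof -
    have d: "norm (x - lam ^ j *\<^sub>R u) < lam ^ j * \<rho>" using that unfolding T_def mem_ball dist_norm by (metis norm_minus_commute)
    have nl: "norm (lam ^ j *\<^sub>R u) = lam ^ j * norm u" using lam by simp
    have "norm (lam ^ j *\<^sub>R u) - norm x \<le> norm (x - lam ^ j *\<^sub>R u)"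
      using norm_triangle_ineq2[of "lam ^ j *\<^sub>R u" x] by (simp add: norm_minus_commute)
    moreover have "norm x - norm (lam ^ j *\<^sub>R u) \<le> norm (x - lam ^ j *\<^sub>R u)"
      using norm_triangle_ineq2[of x "lam ^ j *\<^sub>R u"] by simp
    moreover have "lam ^ j * \<rho> \<le> lam ^ j * (norm u / 2)" using \<rho> lam by (intro mult_left_mono) auto
    ultimately have ABC: "norm (lam ^ j *\<^sub>R u) - norm x \<le> norm (x - lam ^ j *\<^sub>R u)"
      "norm x - norm (lam ^ j *\<^sub>R u) \<le> norm (x - lam ^ j *\<^sub>R u)"
      "lam ^ j * \<rho> \<le> lam ^ j * (norm u / 2)" by blast+
    have e1: "lam ^ j * (norm u / 2) = (lam ^ j * norm u) / 2" by simp
    have e2: "lam ^ j * (3 * norm u / 2) = 3 * (lam ^ j * norm u) / 2" by simp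
    show ?thesis using d nl ABC unfolding e1 by linarith
  qed
  have disj: "j = k" if "x \<in> T j" "x \<in> T k" for j k x
  proof (rule ccontr)
    assume "j \<noteq> k"
    then consider "j < k" | "k < j" by linarith
    then show False
    proof cases
      case 1
      have "lam ^ k \<le> lam ^ Suc j" using 1 lam by (intro power_decreasing) auto
      then have "lam ^ k * norm u \<le> lam ^ Suc j * norm u" using nu by (intro mult_right_mono) auto
      moreover have "lam ^ Suc j * norm u = (lam ^ j * norm u) / 4" unfolding lam_def by simp
      ultimately show False using normT[OF that(1)] normT[OF that(2)] by linarith
    next
      case 2
      have "lam ^ j \<le> lam ^ Suc k" using 2 lam by (intro power_decreasing) auto
      then have "lam ^ j * norm u \<le> lam ^ Suc k * norm u" using nu by (intro mult_right_mono) auto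
      moreover have "lam ^ Suc k * norm u = (lam ^ k * norm u) / 4" unfolding lam_def by simp
      ultimately show False using normT[OF that(1)] normT[OF that(2)] by linarith
    qed
  qed
  have TU: "T j \<subseteq> U" if "j \<ge> J'" for j
  proof
    fix x assume x: "x \<in> T j"
    have "lam ^ j \<le> lam ^ J2" using that lam unfolding J'_def by (intro power_decreasing) auto
    then have "lam ^ j < \<epsilon> / (2 * norm u)" using J2 by simp
    then have "3 * (lam ^ j * norm u) / 2 < \<epsilon>" using nu \<epsilon> by (simp add: field_simps)
    then have "norm x < \<epsilon>" using normT[OF x] by simp
    then show "x \<in> U" using \<epsilon> by auto
  qed
  define S where "S = (\<lambda>i. T (i + J'))"
  define a where "a = (\<lambda>i. \<kappa> * (lam ^ (i + J')) powr e)"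
  have a0: "a i > 0" for i unfolding a_def using \<kappa> lam by simp
  have Smeas: "S i \<in> sets lebesgue" for i unfolding S_def T_def by simp
  have pw: "(\<Sum>i. ennreal (a i) * indicator (S i) x) \<le> ennreal (norm (indicator U x *\<^sub>R h x))" for x
  proof (cases "\<exists>i. x \<in> S i")
    case True
    then obtain i0 where i0: "x \<in> S i0" by blast
    have "(\<Sum>i. ennreal (a i) * indicator (S i) x) = (\<Sum>i\<in>{i0}. ennreal (a i) * indicator (S i) x)"
    proof (rule suminf_finite)
      fix i assume "i \<notin> {i0}"
      then have "x \<notin> S i" using disj i0 unfolding S_def by force
      then show "ennreal (a i) * indicator (S i) x = 0" by simp
    qed simp
    also have "\<dots> = ennreal (a i0)" using i0
      by (metis add.right_neutral empty_iff finite.emptyI indicator_simps(1) mult.right_neutral sum.empty sum.insert)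
    also have "\<dots> \<le> ennreal (norm (indicator U x *\<^sub>R h x))"
    proof (rule ennreal_leI)
      have xU: "x \<in> U" using TU[of "i0 + J'"] i0 unfolding S_def by auto
      have "a i0 \<le> \<bar>h x\<bar>" unfolding a_def using J[of "i0 + J'" x] i0 unfolding S_def J'_def by auto
      then show "a i0 \<le> norm (indicator U x *\<^sub>R h x)" using xU by simp
    qed
    finally show ?thesis .
  next
    case False
    then have "(\<lambda>i. ennreal (a i) * indicator (S i) x) = (\<lambda>i. 0)" by auto
    then show ?thesis by simp
  qed
  define V where "V = unit_ball_vol (real n)"
  have V: "V > 0" unfolding V_def by simp
  have "(\<integral>\<^sup>+x. (\<Sum>i. ennreal (a i) * indicator (S i) x) \<partial>lebesgue) = (\<Sum>i. \<integral>\<^sup>+x. ennreal (a i) * indicator (S i) x \<partial>lebesgue)"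
    by (rule nn_integral_suminf) (use Smeas in auto)
  also have "\<dots> = (\<Sum>i. ennreal (a i) * emeasure lebesgue (S i))"
    by (intro suminf_cong nn_integral_cmult_indicator Smeas)
  also have "\<dots> = (\<Sum>i. ennreal (a i * (V * (lam ^ (i + J') * \<rho>) ^ n)))"
  proof (intro suminf_cong)
    fix i
    have "emeasure lebesgue (S i) = ennreal (V * (lam ^ (i + J') * \<rho>) ^ n)"
      unfolding S_def T_def V_def n_def using lam \<rho> by (intro emeasure_leb_ball) simp
    then show "ennreal (a i) * emeasure lebesgue (S i) = ennreal (a i * (V * (lam ^ (i + J') * \<rho>) ^ n))"
      by (subst ennreal_mult) (use a0[of i] V lam \<rho> in auto)
  qed
  also have "\<dots> = \<infinity>"
  proof (rule ennreal_sum_const_top)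
    show "\<kappa> * V * \<rho> ^ n > 0" using \<kappa> V \<rho> by simp
    fix i
    define l where "l = lam ^ (i + J')"
    have l: "l > 0" "l \<le> 1" unfolding l_def using lam by (auto intro: power_le_one)
    have "1 \<le> l powr (e + real n)"
      using powr_mono2'[of "e + real n" l 1] l e unfolding n_def by simp
    moreover have "l powr (e + real n) = l powr e * l ^ n" using l by (simp add: powr_add powr_realpow)
    ultimately have "1 \<le> l powr e * l ^ n" by simp
    then have "\<kappa> * V * \<rho> ^ n * 1 \<le> \<kappa> * V * \<rho> ^ n * (l powr e * l ^ n)"
      using \<kappa> V \<rho> by (intro mult_left_mono) auto
    then show "\<kappa> * V * \<rho> ^ n \<le> a i * (V * (lam ^ (i + J') * \<rho>) ^ n)"
      unfolding a_def l_def[symmetric] by (simp add: power_mult_distrib algebra_simps)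
  qed
  finally have inf: "(\<integral>\<^sup>+x. (\<Sum>i. ennreal (a i) * indicator (S i) x) \<partial>lebesgue) = \<infinity>" .
  have "(\<integral>\<^sup>+x. (\<Sum>i. ennreal (a i) * indicator (S i) x) \<partial>lebesgue)
      \<le> (\<integral>\<^sup>+x. ennreal (norm (indicator U x *\<^sub>R h x)) \<partial>lebesgue)"
    by (rule nn_integral_mono) (rule pw)
  then have "(\<integral>\<^sup>+x. ennreal (norm (indicator U x *\<^sub>R h x)) \<partial>lebesgue) = \<infinity>"
    using inf by (simp add: top_unique)
  moreover have "integrable lebesgue (\<lambda>x. indicator U x *\<^sub>R h x)"
    using U(3) unfolding set_integrable_def .
  ultimately show False by (simp add: integrable_iff_bounded)
qed



lemma borel_to_leb: "(f::'a::euclidean_space \<Rightarrow> real) \<in> borel_measurable borel \<Longrightarrow> f \<in> borel_measurable lebesgue"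
  by (rule measurable_completion) simp

lemma pseries_partial_lim:
  assumes "((\<lambda>\<beta>. c \<beta> * mono (x::real^'n::finite) \<beta>) has_sum y) UNIV"
  shows "(\<lambda>N. \<Sum>\<beta>\<in>{\<beta>. mdeg \<beta> \<le> N}. c \<beta> * mono x \<beta>) \<longlonglongrightarrow> y"
proof -
  have lim: "((\<lambda>F. \<Sum>\<beta>\<in>F. c \<beta> * mono x \<beta>) \<longlongrightarrow> y) (finite_subsets_at_top UNIV)"
    using assms unfolding has_sum_def .
  have fl: "filterlim (\<lambda>N. {\<beta>::'n\<Rightarrow>nat. mdeg \<beta> \<le> N}) (finite_subsets_at_top UNIV) sequentially"
    unfolding filterlim_finite_subsets_at_top
  proof (intro allI impI)
    fix X :: "('n \<Rightarrow> nat) set" assume X: "finite X \<and> X \<subseteq> UNIV"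
    define N0 where "N0 = Max (mdeg ` X)"
    have mb: "mdeg \<beta> \<le> N0" if "\<beta> \<in> X" for \<beta>
      unfolding N0_def using X that by (intro Max_ge) auto
    have "X \<subseteq> {\<beta>. mdeg \<beta> \<le> N}" if "N \<ge> N0" for N
    proof
      fix \<beta> assume "\<beta> \<in> X"
      then show "\<beta> \<in> {\<beta>. mdeg \<beta> \<le> N}" using mb[of \<beta>] that by simp
    qed
    then show "\<forall>\<^sub>F N in sequentially. finite {\<beta>::'n\<Rightarrow>nat. mdeg \<beta> \<le> N} \<and> X \<subseteq> {\<beta>. mdeg \<beta> \<le> N} \<and> {\<beta>. mdeg \<beta> \<le> N} \<subseteq> UNIV"
      using finite_mdeg_le by (auto simp: eventually_sequentially)
  qed
  show ?thesis using filterlim_compose[OF lim fl] .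
qed

lemma pseries_meas:
  fixes g :: "real^'n::finite \<Rightarrow> real"
  assumes hs: "\<And>x. norm x \<le> \<rho> \<Longrightarrow> ((\<lambda>\<beta>. c \<beta> * mono x \<beta>) has_sum g x) UNIV" and R: "R \<le> \<rho>"
  shows "(\<lambda>x. indicator (ball 0 R) x * g x) \<in> borel_measurable lebesgue"
proof (rule borel_measurable_LIMSEQ_real)
  fix N :: nat
  have "(\<lambda>x::real^'n. indicator (ball 0 R) x * (\<Sum>\<beta>\<in>{\<beta>. mdeg \<beta> \<le> N}. c \<beta> * mono x \<beta>)) \<in> borel_measurable borel"
  proof (intro borel_measurable_times borel_measurable_indicator borel_measurable_continuous_onI)
    show "ball 0 R \<in> sets borel" by simp
    show "continuous_on UNIV (\<lambda>x. \<Sum>\<beta>\<in>{\<beta>. mdeg \<beta> \<le> N}. c \<beta> * mono x \<beta>)"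
      by (intro continuous_intros continuous_on_mult continuous_on_const continuous_mono)
  qed
  then show "(\<lambda>x::real^'n. indicator (ball 0 R) x * (\<Sum>\<beta>\<in>{\<beta>. mdeg \<beta> \<le> N}. c \<beta> * mono x \<beta>)) \<in> borel_measurable lebesgue"
    by (rule borel_to_leb)
next
  fix x :: "real^'n"
  show "(\<lambda>N. indicator (ball 0 R) x * (\<Sum>\<beta>\<in>{\<beta>. mdeg \<beta> \<le> N}. c \<beta> * mono x \<beta>)) \<longlonglongrightarrow> indicator (ball 0 R) x * g x"
  proof (cases "x \<in> ball 0 R")
    case True
    then have "norm x \<le> \<rho>" using R by simp
    have "(\<lambda>N. \<Sum>\<beta>\<in>{\<beta>. mdeg \<beta> \<le> N}. c \<beta> * mono x \<beta>) \<longlonglongrightarrow> g x"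
      by (rule pseries_partial_lim[OF hs[OF \<open>norm x \<le> \<rho>\<close>]])
    then show ?thesis using True by (simp add: indicator_def)
  next
    case False
    then show ?thesis by simp
  qed
qed



lemma lower_calc:
  fixes l \<delta> G E F B s :: real and k d :: nat
  assumes l: "l > 0" and \<delta>: "\<delta> > 0" and G: "G \<ge> l ^ k * \<delta> - E * l ^ Suc k"
    and E: "E * l \<le> \<delta> / 2" and F: "0 < F" "F \<le> B * l ^ d" and s: "s > 0"
  shows "\<delta> / (2 * B powr s) * l powr (real k - real d * s) \<le> G / F powr s"
proof -
  have B: "B > 0" using F l by (metis mult_pos_pos zero_less_power linorder_not_less mult_nonpos_nonneg not_less order.strict_trans1 zero_le_power less_le_not_le)
  have lk: "l ^ k > 0" using l by simp
  have "E * l ^ Suc k = (E * l) * l ^ k" by simp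
  also have "\<dots> \<le> \<delta> / 2 * l ^ k" using E lk by (intro mult_right_mono) auto
  also have "\<delta> / 2 * l ^ k = l ^ k * \<delta> - l ^ k * \<delta> / 2" by simp
  finally have G2: "G \<ge> l ^ k * \<delta> / 2" using G by linarith
  have Fs: "F powr s \<le> (B * l ^ d) powr s" using F s by (intro powr_mono2) auto
  also have "\<dots> = B powr s * l powr (real d * s)"
    using B l by (simp add: powr_mult powr_realpow[symmetric] powr_powr)
  finally have Fs: "F powr s \<le> B powr s * l powr (real d * s)" .
  have Fs0: "F powr s > 0" using F by simp
  have "\<delta> / (2 * B powr s) * l powr (real k - real d * s) = (l ^ k * \<delta> / 2) / (B powr s * l powr (real d * s))"
    using l B by (simp add: powr_diff powr_realpow field_simps)
  also have "\<dots> \<le> (l ^ k * \<delta> / 2) / F powr s"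
  proof (rule divide_left_mono)
    have "0 < B powr s * l powr (real d * s)" using B l by simp
    then show "0 < B powr s * l powr (real d * s) * F powr s" using Fs0 by simp
  qed (use Fs lk \<delta> in auto)
  also have "\<dots> \<le> G / F powr s" using G2 Fs0 by (intro divide_right_mono) auto
  finally show ?thesis .
qed

lemma upper_calc:
  fixes r R G F A' m s :: real and K d :: nat
  assumes r: "0 < r" "r \<le> R" and G: "0 \<le> G" "G \<le> A' * r ^ K" and A': "A' \<ge> 0"
    and F: "F \<ge> m * r ^ d" and m: "m > 0" and s: "s > 0"
  shows "G / F powr s \<le> (A' / m powr s * R powr ((real K - real d * s) + max 0 (- (real K - real d * s))))
            * r powr (- max 0 (- (real K - real d * s)))"
proof -
  define e where "e = real K - real d * s"
  define t where "t = max 0 (- e)"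
  have mr: "m * r ^ d > 0" using m r by simp
  have Fs: "F powr s \<ge> (m * r ^ d) powr s" using F mr s by (intro powr_mono2) auto
  have Fs': "(m * r ^ d) powr s = m powr s * r powr (real d * s)"
    using m r by (simp add: powr_mult powr_realpow[symmetric] powr_powr)
  have pos: "m powr s * r powr (real d * s) > 0" using m r by simp
  have "G / F powr s \<le> A' * r ^ K / (m powr s * r powr (real d * s))"
  proof (rule frac_le)
    show "0 \<le> A' * r ^ K" using A' r by simp
  qed (use G Fs Fs' pos in auto)
  also have "\<dots> = A' / m powr s * r powr e"
    using m r unfolding e_def by (simp add: powr_diff powr_realpow field_simps)
  also have "r powr e \<le> R powr (e + t) * r powr (- t)"
  proof (cases "e \<ge> 0")
    case True
    then have "t = 0" unfolding t_def by simp
    then show ?thesis using True r by (simp add: powr_mono2)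
  next
    case False
    then have "t = - e" unfolding t_def by simp
    then show ?thesis using r by simp
  qed
  then have "A' / m powr s * r powr e \<le> A' / m powr s * (R powr (e + t) * r powr (- t))"
    using A' m by (intro mult_left_mono) auto
  finally show ?thesis unfolding e_def t_def by (simp add: mult.assoc)
qed

lemma key:
  fixes f g :: "real^'n::finite \<Rightarrow> real" and c c' :: "('n \<Rightarrow> nat) \<Rightarrow> real"
  assumes rep: "pseries_rep c f"
    and lower_zero: "\<forall>\<beta>. mdeg \<beta> < d \<longrightarrow> c \<beta> = 0"
    and simple: "\<forall>x. x \<noteq> 0 \<longrightarrow> hom_part c d x \<noteq> 0"
    and f0: "f 0 = 0" and dpos: "d > 0"
    and repg: "pseries_rep c' g" and s: "s > 0"
  shows "loc_integrable0 (\<lambda>x. \<bar>g x\<bar> / \<bar>f x\<bar> powr s) \<longleftrightarrow>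
           (\<forall>\<beta>. real (mdeg \<beta>) \<le> s * real d - real CARD('n) \<longrightarrow> c' \<beta> = 0)"
proof -
  define n where "n = CARD('n)"
  define h where "h = (\<lambda>x. \<bar>g x\<bar> / \<bar>f x\<bar> powr s)"
  obtain rf m M where rf: "rf > 0" and m: "m > 0" and M: "M > 0"
    and fb: "\<And>x. norm x \<le> rf \<Longrightarrow> m * norm x ^ d \<le> \<bar>f x\<bar> \<and> \<bar>f x\<bar> \<le> M * norm x ^ d"
    using f_bounds[OF rep lower_zero simple dpos] by blast
  obtain \<rho>f Af where \<rho>f: "\<rho>f > 0" and "Af \<ge> 0"
    and hsf: "\<And>x. norm x \<le> \<rho>f \<Longrightarrow> ((\<lambda>\<beta>. c \<beta> * mono x \<beta>) has_sum f x) UNIV"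
    and "\<And>K x. norm x \<le> \<rho>f \<Longrightarrow>
        \<bar>f x - (\<Sum>\<beta>\<in>{\<beta>. mdeg \<beta> < K}. c \<beta> * mono x \<beta>)\<bar> \<le> Af * (norm x / \<rho>f) ^ K"
    using pseries_tail[OF rep] by blast
  obtain \<rho>g Ag where \<rho>g: "\<rho>g > 0" and Ag: "Ag \<ge> 0"
    and hsg: "\<And>x. norm x \<le> \<rho>g \<Longrightarrow> ((\<lambda>\<beta>. c' \<beta> * mono x \<beta>) has_sum g x) UNIV"
    and tailg: "\<And>K x. norm x \<le> \<rho>g \<Longrightarrow>
        \<bar>g x - (\<Sum>\<beta>\<in>{\<beta>. mdeg \<beta> < K}. c' \<beta> * mono x \<beta>)\<bar> \<le> Ag * (norm x / \<rho>g) ^ K"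
    using pseries_tail[OF repg] by blast
  have h0: "h 0 = 0" unfolding h_def using f0 by simp
  show ?thesis
  proof
    assume int: "loc_integrable0 (\<lambda>x. \<bar>g x\<bar> / \<bar>f x\<bar> powr s)"
    show "\<forall>\<beta>::'n\<Rightarrow>nat. real (mdeg \<beta>) \<le> s * real d - real CARD('n) \<longrightarrow> c' \<beta> = 0"
    proof (rule ccontr)
      assume "\<not> ?thesis"
      then obtain \<beta>0 where \<beta>0: "real (mdeg \<beta>0) \<le> s * real d - real n" "c' \<beta>0 \<noteq> 0"
        unfolding n_def by auto
      define k where "k = (LEAST k. \<exists>\<beta>. mdeg \<beta> = k \<and> c' \<beta> \<noteq> 0)"
      have kex: "\<exists>\<beta>. mdeg \<beta> = k \<and> c' \<beta> \<noteq> 0"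
        unfolding k_def by (rule LeastI[of _ "mdeg \<beta>0"]) (use \<beta>0 in auto)
      have klow: "\<forall>\<beta>. mdeg \<beta> < k \<longrightarrow> c' \<beta> = 0"
      proof (intro allI impI)
        fix \<beta> :: "'n \<Rightarrow> nat" assume "mdeg \<beta> < k"
        then have "\<not> (\<exists>\<beta>'. mdeg \<beta>' = mdeg \<beta> \<and> c' \<beta>' \<noteq> 0)"
          unfolding k_def by (rule not_less_Least)
        then show "c' \<beta> = 0" by auto
      qed
      have kle: "k \<le> mdeg \<beta>0" unfolding k_def by (rule Least_le) (use \<beta>0 in auto)
      obtain \<beta>k where \<beta>k: "mdeg \<beta>k = k" "c' \<beta>k \<noteq> 0" using kex by blast
      obtain u0 where u0: "hom_part c' k u0 \<noteq> 0" using hom_part_nonzero[of \<beta>k k c'] \<beta>k by blast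
      obtain u where u: "u \<noteq> 0" "hom_part c' k u \<noteq> 0"
      proof (cases "u0 = 0")
        case False then show thesis using that u0 by blast
      next
        case True
        obtain i :: 'n where True by blast
        define v :: "real^'n" where "v = axis i 1"
        have v: "v \<noteq> 0" unfolding v_def by (simp add: axis_eq_0_iff)
        have "hom_part c' k (0 *\<^sub>R v) = 0 ^ k * hom_part c' k v" by (rule hom_part_scale)
        then have "hom_part c' k v \<noteq> 0" using u0 True by auto
        then show thesis using that v by blast
      qed
      define \<delta> where "\<delta> = \<bar>hom_part c' k u\<bar> / 2"
      have \<delta>: "\<delta> > 0" unfolding \<delta>_def using u by simp
      have "continuous_on UNIV (hom_part c' k)" by (rule continuous_hom_part)
      then obtain \<rho>1 where \<rho>1: "\<rho>1 > 0"
        "\<And>y. dist y u < \<rho>1 \<Longrightarrow> dist (hom_part c' k y) (hom_part c' k u) < \<delta>"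
        unfolding continuous_on_iff using \<delta> by blast
      have hpb: "\<delta> \<le> \<bar>hom_part c' k y\<bar>" if "dist y u < \<rho>1" for y
        using \<rho>1(2)[OF that] unfolding \<delta>_def dist_real_def by linarith
      define \<rho> where "\<rho> = min \<rho>1 (norm u / 2)"
      have \<rho>: "\<rho> > 0" "\<rho> \<le> norm u / 2" "\<rho> \<le> \<rho>1" unfolding \<rho>_def using \<rho>1 u by auto
      define E where "E = Ag * (2 * norm u / \<rho>g) ^ Suc k"
      have E: "E \<ge> 0" unfolding E_def using Ag \<rho>g by simp
      define B where "B = M * (2 * norm u) ^ d"
      define \<kappa> where "\<kappa> = \<delta> / (2 * B powr s)"
      have B: "B > 0" unfolding B_def using M u by simp
      have \<kappa>: "\<kappa> > 0" unfolding \<kappa>_def using \<delta> B by simp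
      define e where "e = real k - real d * s"
      have e: "e + real CARD('n) \<le> 0" unfolding e_def using kle \<beta>0(1) unfolding n_def
        by (simp add: algebra_simps)
      define \<epsilon>0 where "\<epsilon>0 = min (min \<rho>g rf / (2 * norm u)) (\<delta> / (2 * (E + 1)))"
      have \<epsilon>0: "\<epsilon>0 > 0" unfolding \<epsilon>0_def using \<rho>g rf u \<delta> E by auto
      obtain J where J: "(1/4::real) ^ J < \<epsilon>0" using real_arch_pow_inv[OF \<epsilon>0, of "1/4"] by auto
      have "\<not> loc_integrable0 h"
      proof (rule lower_not_integrable[OF u(1) \<rho>(1,2) \<kappa> e])
        show "\<exists>J. \<forall>j\<ge>J. \<forall>x\<in>ball (((1/4::real) ^ j) *\<^sub>R u) ((1/4) ^ j * \<rho>).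
                  \<kappa> * ((1/4) ^ j) powr e \<le> \<bar>h x\<bar>"
        proof (intro exI allI impI ballI)
          fix j x assume j: "J \<le> j" and x: "x \<in> ball (((1/4::real) ^ j) *\<^sub>R u) ((1/4) ^ j * \<rho>)"
          define l where "l = (1/4::real) ^ j"
          have l: "l > 0" "l < \<epsilon>0" using J j unfolding l_def
            by (auto intro: le_less_trans[OF power_decreasing])
          have xl: "norm (x - l *\<^sub>R u) < l * \<rho>" using x unfolding l_def mem_ball dist_norm
            by (metis norm_minus_commute)
          define y where "y = (1 / l) *\<^sub>R x"
          have xy: "x = l *\<^sub>R y" unfolding y_def using l by simp
          have "l * norm (y - u) = norm (x - l *\<^sub>R u)"
          proof -
            have "x - l *\<^sub>R u = l *\<^sub>R (y - u)" unfolding xy by (simp add: algebra_simps)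
            then show ?thesis using l by simp
          qed
          then have "l * norm (y - u) < l * \<rho>" using xl by simp
          then have "norm (y - u) < \<rho>" using l by simp
          then have yu: "dist y u < \<rho>1" using \<rho> by (simp add: dist_norm)
          have hpx: "l ^ k * \<delta> \<le> \<bar>hom_part c' k x\<bar>"
            unfolding xy hom_part_scale using hpb[OF yu] l by (simp add: abs_mult mult_left_mono)
          have nx1: "norm x \<le> l * (2 * norm u)"
          proof -
            have "norm x \<le> norm (l *\<^sub>R u) + norm (x - l *\<^sub>R u)" by (rule norm_triangle_sub)
            also have "\<dots> \<le> l * norm u + l * \<rho>" using xl l by simp
            also have "\<dots> \<le> l * (2 * norm u)" using \<rho> l by (simp add: algebra_simps)
            finally show ?thesis .
          qed
          have nx2: "norm x > 0"
          proof -
            have "norm (l *\<^sub>R u) \<le> norm x + norm (x - l *\<^sub>R u)"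
              by (metis norm_triangle_sub add.commute norm_minus_commute)
            then have "l * norm u < norm x + l * \<rho>" using xl l by simp
            moreover have "l * \<rho> \<le> l * (norm u / 2)" using \<rho> l by (intro mult_left_mono) auto
            ultimately have "norm x > l * norm u - l * (norm u / 2)" by linarith
            moreover have "l * norm u - l * (norm u / 2) = l * norm u / 2" by simp
            moreover have "l * norm u > 0" using l u by simp
            ultimately show ?thesis by linarith
          qed
          have "l * (2 * norm u) < \<epsilon>0 * (2 * norm u)" using l u by simp
          also have "\<dots> \<le> min \<rho>g rf / (2 * norm u) * (2 * norm u)"
            unfolding \<epsilon>0_def using u by (intro mult_right_mono) auto
          also have "\<dots> = min \<rho>g rf" using u by simp
          finally have nx3: "norm x \<le> \<rho>g" "norm x \<le> rf" using nx1 by auto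
          have tg: "\<bar>g x - hom_part c' k x\<bar> \<le> Ag * (norm x / \<rho>g) ^ Suc k"
            using tailg[OF nx3(1), of "Suc k"] unfolding sum_low_hom[OF klow] .
          have "(norm x / \<rho>g) ^ Suc k \<le> (l * (2 * norm u) / \<rho>g) ^ Suc k"
            using nx1 nx2 \<rho>g by (intro power_mono divide_right_mono) auto
          also have "\<dots> = (2 * norm u / \<rho>g) ^ Suc k * l ^ Suc k" by (simp add: power_mult_distrib field_simps)
          finally have P: "(norm x / \<rho>g) ^ Suc k \<le> (2 * norm u / \<rho>g) ^ Suc k * l ^ Suc k" .
          have "Ag * (norm x / \<rho>g) ^ Suc k \<le> Ag * ((2 * norm u / \<rho>g) ^ Suc k * l ^ Suc k)"
            using P Ag by (rule mult_left_mono)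
          also have "\<dots> = E * l ^ Suc k" unfolding E_def by simp
          finally have "Ag * (norm x / \<rho>g) ^ Suc k \<le> E * l ^ Suc k" .
          then have G: "\<bar>g x\<bar> \<ge> l ^ k * \<delta> - E * l ^ Suc k" using tg hpx by linarith
          have El: "E * l \<le> \<delta> / 2"
          proof -
            have "E * l \<le> (E + 1) * l" using l by simp
            also have "\<dots> \<le> (E + 1) * (\<delta> / (2 * (E + 1)))"
              using l E unfolding \<epsilon>0_def by (intro mult_left_mono) auto
            also have "\<dots> = \<delta> / 2" using E by (simp add: field_simps)
            finally show ?thesis .
          qed
          have F1: "\<bar>f x\<bar> > 0"
          proof -
            have "m * norm x ^ d > 0" using m nx2 by simp
            then show ?thesis using fb[OF nx3(2)] by linarith
          qed
          have "\<bar>f x\<bar> \<le> M * norm x ^ d" using fb[OF nx3(2)] by blast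
          also have "\<dots> \<le> M * (l * (2 * norm u)) ^ d"
            using M nx1 nx2 by (intro mult_left_mono power_mono) auto
          also have "\<dots> = B * l ^ d" unfolding B_def by (simp add: power_mult_distrib)
          finally have F2: "\<bar>f x\<bar> \<le> B * l ^ d" .
          have "\<kappa> * l powr e \<le> \<bar>g x\<bar> / \<bar>f x\<bar> powr s"
            unfolding \<kappa>_def e_def by (rule lower_calc[OF l(1) \<delta> G El F1 F2 s])
          then show "\<kappa> * ((1/4) ^ j) powr e \<le> \<bar>h x\<bar>" unfolding h_def l_def by simp
        qed
      qed
      then show False using int unfolding h_def by simp
    qed
  next
    assume low: "\<forall>\<beta>::'n\<Rightarrow>nat. real (mdeg \<beta>) \<le> s * real d - real CARD('n) \<longrightarrow> c' \<beta> = 0"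
    define K where "K = nat (\<lfloor>s * real d - real n\<rfloor> + 1)"
    have klow: "\<forall>\<beta>. mdeg \<beta> < K \<longrightarrow> c' \<beta> = 0"
    proof (intro allI impI)
      fix \<beta> :: "'n \<Rightarrow> nat" assume "mdeg \<beta> < K"
      then have "int (mdeg \<beta>) \<le> \<lfloor>s * real d - real n\<rfloor>" unfolding K_def by linarith
      then have "real (mdeg \<beta>) \<le> s * real d - real n" by (simp add: le_floor_iff)
      then show "c' \<beta> = 0" using low unfolding n_def by auto
    qed
    have Kgt: "real K > s * real d - real n"
    proof -
      have "real_of_int (\<lfloor>s * real d - real n\<rfloor> + 1) > s * real d - real n" by linarith
      moreover have "real K \<ge> real_of_int (\<lfloor>s * real d - real n\<rfloor> + 1)" unfolding K_def by linarith
      ultimately show ?thesis by linarith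
    qed
    define R where "R = min (min rf \<rho>g) \<rho>f"
    have R: "R > 0" "R \<le> rf" "R \<le> \<rho>g" "R \<le> \<rho>f" unfolding R_def using rf \<rho>g \<rho>f by auto
    define e where "e = real K - real d * s"
    define t where "t = max 0 (- e)"
    have t: "0 \<le> t" "t < real CARD('n)" unfolding t_def e_def using Kgt unfolding n_def
      by (auto simp: algebra_simps)
    define C where "C = Ag / \<rho>g ^ K / m powr s * R powr (e + t)"
    have C: "C \<ge> 0" unfolding C_def using Ag \<rho>g m by simp
    have hb: "\<bar>h x\<bar> \<le> C * norm x powr (- t)" if x: "norm x < R" "x \<noteq> 0" for x
    proof -
      have nx: "0 < norm x" "norm x \<le> R" using x by auto
      have "\<bar>g x\<bar> \<le> Ag * (norm x / \<rho>g) ^ K"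
        using tailg[of x K] nx R klow by simp
      also have "\<dots> = Ag / \<rho>g ^ K * norm x ^ K" by (simp add: power_divide)
      finally have G: "\<bar>g x\<bar> \<le> Ag / \<rho>g ^ K * norm x ^ K" .
      have F: "\<bar>f x\<bar> \<ge> m * norm x ^ d" using fb[of x] nx R by auto
      have "\<bar>g x\<bar> / \<bar>f x\<bar> powr s \<le> C * norm x powr (- t)"
        unfolding C_def e_def t_def
        by (rule upper_calc[OF nx(1) nx(2) abs_ge_zero G _ F m s]) (use Ag \<rho>g in simp)
      then show ?thesis unfolding h_def by simp
    qed
    have mg: "(\<lambda>x. indicator (ball 0 R) x * g x) \<in> borel_measurable lebesgue"
      by (rule pseries_meas[OF hsg R(3)])
    have mf: "(\<lambda>x. indicator (ball 0 R) x * f x) \<in> borel_measurable lebesgue"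
      by (rule pseries_meas[OF hsf R(4)])
    have eq: "(\<lambda>x. indicator (ball 0 R) x * h x) =
              (\<lambda>x. \<bar>indicator (ball 0 R) x * g x\<bar> / \<bar>indicator (ball 0 R) x * f x\<bar> powr s)"
      unfolding h_def by (auto simp: indicator_def fun_eq_iff)
    have meas: "(\<lambda>x. indicator (ball 0 R) x * h x) \<in> borel_measurable lebesgue"
      unfolding eq by (intro borel_measurable_divide borel_measurable_abs measurable_abs_powr mg mf)
    have "h absolutely_integrable_on ball 0 R"
      by (rule upper_integrable[OF R(1) C t hb h0 meas])
    then show "loc_integrable0 (\<lambda>x. \<bar>g x\<bar> / \<bar>f x\<bar> powr s)"
      unfolding loc_integrable0_def h_def using R(1) by (intro exI[of _ "ball 0 R"]) auto
  qed
qed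



lemma pseries_rep_mono:
  "pseries_rep (\<lambda>\<beta>. if \<beta> = \<beta>1 then a else 0) (\<lambda>x::real^'n::finite. a * mono x \<beta>1)"
  unfolding pseries_rep_def
  by (intro exI[of _ 1] conjI ballI has_sum_finite_neutralI[of "{\<beta>1}"]) auto

lemma maxideal_low:
  assumes "a \<le> 0"
  shows "maxideal_pow a = {g::real^'n::finite \<Rightarrow> real. analytic_germ0 g}"
  using assms unfolding maxideal_pow_def analytic_germ0_def by force

lemma maxideal_strict:
  assumes ab: "a < b" and b1: "1 \<le> b"
  shows "maxideal_pow a \<noteq> (maxideal_pow b :: (real^'n::finite \<Rightarrow> real) set)"
proof -
  obtain i :: 'n where True by blast
  define N where "N = nat (b - 1)"
  have N: "int N = b - 1" unfolding N_def using b1 by simp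
  define \<beta>1 :: "'n \<Rightarrow> nat" where "\<beta>1 = (\<lambda>j. if j = i then N else 0)"
  have m1: "mdeg \<beta>1 = N" unfolding mdeg_def \<beta>1_def by simp
  define g :: "real^'n \<Rightarrow> real" where "g = (\<lambda>x. 1 * mono x \<beta>1)"
  have rg: "pseries_rep (\<lambda>\<beta>. if \<beta> = \<beta>1 then 1 else 0) g" unfolding g_def by (rule pseries_rep_mono)
  have "g \<in> maxideal_pow a"
    unfolding maxideal_pow_def using rg m1 N ab by (intro CollectI exI[of _ "\<lambda>\<beta>. if \<beta> = \<beta>1 then 1 else 0"]) auto
  moreover have "g \<notin> maxideal_pow b"
  proof
    assume "g \<in> maxideal_pow b"
    then obtain c'' where rc: "pseries_rep c'' g" and low: "\<forall>\<beta>. int (mdeg \<beta>) < b \<longrightarrow> c'' \<beta> = 0"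
      unfolding maxideal_pow_def by blast
    obtain \<rho> A where \<rho>: "\<rho> > 0" "A \<ge> 0"
      and "\<And>x. norm x \<le> \<rho> \<Longrightarrow> ((\<lambda>\<beta>. c'' \<beta> * mono x \<beta>) has_sum g x) UNIV"
      and tail: "\<And>K x. norm x \<le> \<rho> \<Longrightarrow>
        \<bar>g x - (\<Sum>\<beta>\<in>{\<beta>. mdeg \<beta> < K}. c'' \<beta> * mono x \<beta>)\<bar> \<le> A * (norm x / \<rho>) ^ K"
      using pseries_tail[OF rc] by blast
    define t where "t = min \<rho> (\<rho> ^ Suc N / (2 * (A + 1)))"
    have t: "t > 0" "t \<le> \<rho>" "t \<le> \<rho> ^ Suc N / (2 * (A + 1))" unfolding t_def using \<rho> by auto
    define x :: "real^'n" where "x = t *\<^sub>R axis i 1"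
    have nx: "norm x = t" unfolding x_def using t by simp
    have ax: "mono (axis i 1 :: real^'n) \<beta>1 = 1"
      unfolding mono_def \<beta>1_def by (intro prod.neutral) (auto simp: axis_def)
    have gx: "g x = t ^ N" unfolding g_def x_def mono_scale ax m1 by simp
    have s0: "(\<Sum>\<beta>\<in>{\<beta>. mdeg \<beta> < Suc N}. c'' \<beta> * mono x \<beta>) = 0"
      using low N by (intro sum.neutral) auto
    have "t ^ N \<le> A * (t / \<rho>) ^ Suc N" using tail[of x "Suc N"] nx t gx s0 by simp
    also have "\<dots> = t ^ N * (A * t / \<rho> ^ Suc N)" using \<rho> by (simp add: power_divide field_simps)
    finally have "t ^ N * 1 \<le> t ^ N * (A * t / \<rho> ^ Suc N)" by simp
    moreover have "t ^ N > 0" using t by simp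
    ultimately have "1 \<le> A * t / \<rho> ^ Suc N" by (metis mult_le_cancel_left_pos)
    moreover have "A * t / \<rho> ^ Suc N \<le> (A + 1) * t / \<rho> ^ Suc N"
      using t \<rho> by (intro divide_right_mono mult_right_mono) auto
    moreover have "(A + 1) * t / \<rho> ^ Suc N \<le> 1 / 2"
    proof -
      have Apos: "0 < 2 * (A + 1)" using \<rho> by simp
      have "t * (2 * (A + 1)) \<le> \<rho> ^ Suc N"
        using t(3) pos_le_divide_eq[OF Apos, of t "\<rho> ^ Suc N"] by blast
      moreover have "t * (2 * (A + 1)) = 2 * ((A + 1) * t)" by (simp add: algebra_simps)
      ultimately have h1: "(A + 1) * t \<le> \<rho> ^ Suc N / 2" by linarith
      have "(A + 1) * t / \<rho> ^ Suc N \<le> (\<rho> ^ Suc N / 2) / \<rho> ^ Suc N"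
        using \<rho> h1 by (intro divide_right_mono) auto
      also have "\<dots> = 1 / 2" using \<rho> by simp
      finally show ?thesis .
    qed
    ultimately show False by linarith
  qed
  ultimately show ?thesis by blast
qed



lemma char_ideal:
  fixes f :: "real^'n::finite \<Rightarrow> real" and c :: "('n \<Rightarrow> nat) \<Rightarrow> real"
  assumes rep: "pseries_rep c f"
    and lower_zero: "\<forall>\<beta>. mdeg \<beta> < d \<longrightarrow> c \<beta> = 0"
    and simple: "\<forall>x. x \<noteq> 0 \<longrightarrow> hom_part c d x \<noteq> 0"
    and f0: "f 0 = 0" and dpos: "d > 0" and \<alpha>: "\<alpha> > 0"
  shows "mult_ideal0 f \<alpha> = maxideal_pow (\<lfloor>\<alpha> * real d\<rfloor> - int CARD('n) + 1)"
proof (intro set_eqI iffI)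
  fix g :: "real^'n \<Rightarrow> real" assume "g \<in> mult_ideal0 f \<alpha>"
  then obtain c' where rg: "pseries_rep c' g" and int: "loc_integrable0 (\<lambda>x. \<bar>g x\<bar> / \<bar>f x\<bar> powr \<alpha>)"
    unfolding mult_ideal0_def analytic_germ0_def by blast
  have low: "\<forall>\<beta>::'n\<Rightarrow>nat. real (mdeg \<beta>) \<le> \<alpha> * real d - real CARD('n) \<longrightarrow> c' \<beta> = 0"
    using key[OF rep lower_zero simple f0 dpos rg \<alpha>] int by blast
  have "\<forall>\<beta>. int (mdeg \<beta>) < \<lfloor>\<alpha> * real d\<rfloor> - int CARD('n) + 1 \<longrightarrow> c' \<beta> = 0"
  proof (intro allI impI)
    fix \<beta> :: "'n \<Rightarrow> nat"
    assume "int (mdeg \<beta>) < \<lfloor>\<alpha> * real d\<rfloor> - int CARD('n) + 1"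
    then have "int (mdeg \<beta>) + int CARD('n) \<le> \<lfloor>\<alpha> * real d\<rfloor>" by linarith
    then have "real_of_int (int (mdeg \<beta>) + int CARD('n)) \<le> \<alpha> * real d" by (simp only: le_floor_iff)
    then have "real (mdeg \<beta>) \<le> \<alpha> * real d - real CARD('n)" by simp
    then show "c' \<beta> = 0" using low by blast
  qed
  then show "g \<in> maxideal_pow (\<lfloor>\<alpha> * real d\<rfloor> - int CARD('n) + 1)"
    unfolding maxideal_pow_def using rg by blast
next
  fix g :: "real^'n \<Rightarrow> real" assume "g \<in> maxideal_pow (\<lfloor>\<alpha> * real d\<rfloor> - int CARD('n) + 1)"
  then obtain c' where rg: "pseries_rep c' g"
    and low: "\<forall>\<beta>. int (mdeg \<beta>) < \<lfloor>\<alpha> * real d\<rfloor> - int CARD('n) + 1 \<longrightarrow> c' \<beta> = 0"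
    unfolding maxideal_pow_def by blast
  have "\<forall>\<beta>::'n\<Rightarrow>nat. real (mdeg \<beta>) \<le> \<alpha> * real d - real CARD('n) \<longrightarrow> c' \<beta> = 0"
  proof (intro allI impI)
    fix \<beta> :: "'n \<Rightarrow> nat"
    assume "real (mdeg \<beta>) \<le> \<alpha> * real d - real CARD('n)"
    then have "real_of_int (int (mdeg \<beta>) + int CARD('n)) \<le> \<alpha> * real d" by simp
    then have "int (mdeg \<beta>) + int CARD('n) \<le> \<lfloor>\<alpha> * real d\<rfloor>" by (simp only: le_floor_iff)
    then show "c' \<beta> = 0" using low by auto
  qed
  then have "loc_integrable0 (\<lambda>x. \<bar>g x\<bar> / \<bar>f x\<bar> powr \<alpha>)"
    using key[OF rep lower_zero simple f0 dpos rg \<alpha>] by blast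
  then show "g \<in> mult_ideal0 f \<alpha>"
    unfolding mult_ideal0_def analytic_germ0_def using rg by blast
qed

lemma d_pos:
  fixes f :: "real^'n::finite \<Rightarrow> real" and c :: "('n \<Rightarrow> nat) \<Rightarrow> real"
  assumes rep: "pseries_rep c f"
    and simple: "\<forall>x. x \<noteq> 0 \<longrightarrow> hom_part c d x \<noteq> 0"
    and f0: "f 0 = 0"
  shows "d > 0"
proof (rule ccontr)
  assume "\<not> d > 0"
  then have d0: "d = 0" by simp
  obtain \<rho> A where \<rho>: "\<rho> > 0" "A \<ge> 0"
    and "\<And>x. norm x \<le> \<rho> \<Longrightarrow> ((\<lambda>\<beta>. c \<beta> * mono x \<beta>) has_sum f x) UNIV"
    and tail: "\<And>K x. norm x \<le> \<rho> \<Longrightarrow>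
        \<bar>f x - (\<Sum>\<beta>\<in>{\<beta>. mdeg \<beta> < K}. c \<beta> * mono x \<beta>)\<bar> \<le> A * (norm x / \<rho>) ^ K"
    using pseries_tail[OF rep] by blast
  have "\<bar>f 0 - (\<Sum>\<beta>\<in>{\<beta>. mdeg \<beta> < Suc 0}. c \<beta> * mono (0::real^'n) \<beta>)\<bar> \<le> A * (norm (0::real^'n) / \<rho>) ^ Suc 0"
    using tail[of 0 "Suc 0"] \<rho> by simp
  moreover have "(\<Sum>\<beta>\<in>{\<beta>. mdeg \<beta> < Suc 0}. c \<beta> * mono (0::real^'n) \<beta>) = hom_part c 0 0"
    by (rule sum_low_hom) simp
  ultimately have "f 0 = hom_part c 0 0" by simp
  obtain i :: 'n where True by blast
  define v :: "real^'n" where "v = axis i 1"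
  have v: "v \<noteq> 0" unfolding v_def by (simp add: axis_eq_0_iff)
  have "hom_part c 0 (0 *\<^sub>R v) = 0 ^ 0 * hom_part c 0 v" by (rule hom_part_scale)
  then have "hom_part c 0 0 = hom_part c 0 v" by simp
  also have "\<dots> \<noteq> 0" using simple v d0 by auto
  finally show False using \<open>f 0 = hom_part c 0 0\<close> f0 by simp
qed

theorem proposition3p3:
  fixes f :: "real^'n \<Rightarrow> real" and c :: "('n \<Rightarrow> nat) \<Rightarrow> real" and d :: nat
  assumes rep: "pseries_rep c f"
    and fd_nonzero: "\<exists>\<beta>. mdeg \<beta> = d \<and> c \<beta> \<noteq> 0"
    and lower_zero: "\<forall>\<beta>. mdeg \<beta> < d \<longrightarrow> c \<beta> = 0"
    and f0: "f 0 = 0"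
    and simple: "\<forall>x. x \<noteq> 0 \<longrightarrow> hom_part c d x \<noteq> 0"
  shows "(\<forall>\<alpha>::real. \<alpha> > 0 \<and> \<alpha> \<in> \<rat> \<longrightarrow>
            mult_ideal0 f \<alpha> = maxideal_pow (\<lfloor>\<alpha> * real d\<rfloor> - int CARD('n) + 1))
       \<and> jumping_numbers0 f = {real_of_int k / real d | k. k \<ge> int CARD('n)}
       \<and> rlct f = real CARD('n) / real d"
proof -
  define n where "n = CARD('n)"
  have n1: "n \<ge> 1" unfolding n_def by simp
  have dpos: "d > 0" by (rule d_pos[OF rep simple f0])
  have dr: "real d > 0" using dpos by simp
  define \<phi> where "\<phi> = (\<lambda>\<alpha>::real. \<lfloor>\<alpha> * real d\<rfloor> - int n + 1)"
  have J: "mult_ideal0 f \<alpha> = maxideal_pow (\<phi> \<alpha>)" if "\<alpha> > 0" for \<alpha>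
    unfolding \<phi>_def n_def by (rule char_ideal[OF rep lower_zero simple f0 dpos that])
  have part1: "\<forall>\<alpha>::real. \<alpha> > 0 \<and> \<alpha> \<in> \<rat> \<longrightarrow>
            mult_ideal0 f \<alpha> = maxideal_pow (\<lfloor>\<alpha> * real d\<rfloor> - int CARD('n) + 1)"
    using J unfolding \<phi>_def n_def by blast
  have part2: "jumping_numbers0 f = {real_of_int k / real d | k. k \<ge> int CARD('n)}"
  proof (intro set_eqI iffI)
    fix \<alpha> assume "\<alpha> \<in> jumping_numbers0 f"
    then obtain e0 where \<alpha>: "\<alpha> > 0" and e0: "e0 > 0"
      and jump: "\<And>e. 0 < e \<Longrightarrow> e < e0 \<Longrightarrow> mult_ideal0 f (\<alpha> - e) \<noteq> mult_ideal0 f \<alpha>"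
      unfolding jumping_numbers0_def by blast
    define k where "k = \<lfloor>\<alpha> * real d\<rfloor>"
    have kle: "real_of_int k \<le> \<alpha> * real d" unfolding k_def by simp
    have keq: "real_of_int k = \<alpha> * real d"
    proof (rule ccontr)
      assume "real_of_int k \<noteq> \<alpha> * real d"
      then have gap: "\<alpha> * real d - real_of_int k > 0" using kle by simp
      define q where "q = (\<alpha> * real d - real_of_int k) / real d"
      have q: "q > 0" unfolding q_def using gap dr by simp
      define e where "e = min e0 (min \<alpha> q) / 2"
      have e: "0 < e" "e < e0" "e < \<alpha>" "e < q"
        unfolding e_def using e0 \<alpha> q by auto
      have "e * real d < q * real d" using e(4) dr by simp
      also have "q * real d = \<alpha> * real d - real_of_int k" unfolding q_def using dr by simp
      finally have eq: "e * real d < \<alpha> * real d - real_of_int k" .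
      from eq have "real_of_int k \<le> (\<alpha> - e) * real d" by (simp add: algebra_simps)
      moreover have "(\<alpha> - e) * real d < real_of_int k + 1"
      proof -
        have "(\<alpha> - e) * real d \<le> \<alpha> * real d" using e dr by (simp add: mult_right_mono)
        moreover have "\<alpha> * real d < real_of_int k + 1" unfolding k_def by linarith
        ultimately show ?thesis by linarith
      qed
      ultimately have "\<lfloor>(\<alpha> - e) * real d\<rfloor> = k" by (simp add: floor_eq_iff)
      then have "\<phi> (\<alpha> - e) = \<phi> \<alpha>" unfolding \<phi>_def k_def by simp
      then have "mult_ideal0 f (\<alpha> - e) = mult_ideal0 f \<alpha>" using J[of "\<alpha> - e"] J[OF \<alpha>] e by simp
      then show False using jump[OF e(1,2)] by simp
    qed
    have kn: "k \<ge> int n"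
    proof (rule ccontr)
      assume "\<not> k \<ge> int n"
      then have p0: "\<phi> \<alpha> \<le> 0" unfolding \<phi>_def k_def by simp
      define e where "e = min e0 \<alpha> / 2"
      have e: "0 < e" "e < e0" "e < \<alpha>" unfolding e_def using e0 \<alpha> by auto
      have "(\<alpha> - e) * real d \<le> \<alpha> * real d" using e dr by (simp add: mult_right_mono)
      then have "\<lfloor>(\<alpha> - e) * real d\<rfloor> \<le> \<lfloor>\<alpha> * real d\<rfloor>" by (rule floor_mono)
      then have p1: "\<phi> (\<alpha> - e) \<le> 0" using p0 unfolding \<phi>_def by simp
      have A: "maxideal_pow (\<phi> \<alpha>) = {g::real^'n \<Rightarrow> real. analytic_germ0 g}" by (rule maxideal_low[OF p0])
      have B: "maxideal_pow (\<phi> (\<alpha> - e)) = {g::real^'n \<Rightarrow> real. analytic_germ0 g}" by (rule maxideal_low[OF p1])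
      have "mult_ideal0 f (\<alpha> - e) = mult_ideal0 f \<alpha>"
        using J[of "\<alpha> - e"] J[OF \<alpha>] e A B by simp
      then show False using jump[OF e(1,2)] by simp
    qed
    have "\<alpha> = real_of_int k / real d" using keq dr by (simp add: field_simps)
    then show "\<alpha> \<in> {real_of_int k / real d | k. k \<ge> int CARD('n)}" using kn unfolding n_def by blast
  next
    fix \<alpha> assume "\<alpha> \<in> {real_of_int k / real d | k. k \<ge> int CARD('n)}"
    then obtain k where k: "k \<ge> int n" and \<alpha>: "\<alpha> = real_of_int k / real d" unfolding n_def by blast
    have kpos: "real_of_int k > 0" using k n1 by linarith
    have \<alpha>pos: "\<alpha> > 0" unfolding \<alpha> using kpos dr by simp
    have \<alpha>d: "\<alpha> * real d = real_of_int k" unfolding \<alpha> using dr by simp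
    have "\<forall>e. 0 < e \<and> e < min \<alpha> (1 / real d) \<longrightarrow> mult_ideal0 f (\<alpha> - e) \<noteq> mult_ideal0 f \<alpha>"
    proof (intro allI impI)
      fix e assume e: "0 < e \<and> e < min \<alpha> (1 / real d)"
      have ed: "e * real d < 1" using e dr by (simp add: field_simps)
      have ed0: "e * real d > 0" using e dr by simp
      have "(\<alpha> - e) * real d = real_of_int k - e * real d" using \<alpha>d by (simp add: algebra_simps)
      then have "\<lfloor>(\<alpha> - e) * real d\<rfloor> = k - 1" using ed ed0 by (simp add: floor_eq_iff)
      then have p1: "\<phi> (\<alpha> - e) = k - int n" unfolding \<phi>_def by simp
      have p2: "\<phi> \<alpha> = k - int n + 1" unfolding \<phi>_def \<alpha>d by simp
      have "maxideal_pow (\<phi> (\<alpha> - e)) \<noteq> (maxideal_pow (\<phi> \<alpha>) :: (real^'n \<Rightarrow> real) set)"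
        unfolding p1 p2 using k by (intro maxideal_strict) auto
      moreover have "\<alpha> - e > 0" using e by simp
      ultimately show "mult_ideal0 f (\<alpha> - e) \<noteq> mult_ideal0 f \<alpha>" using J[of "\<alpha> - e"] J[OF \<alpha>pos] by simp
    qed
    moreover have "min \<alpha> (1 / real d) > 0" using \<alpha>pos dr by simp
    ultimately show "\<alpha> \<in> jumping_numbers0 f" unfolding jumping_numbers0_def using \<alpha>pos by blast
  qed
  have part3: "rlct f = real CARD('n) / real d"
  proof -
    define c1 :: "('n \<Rightarrow> nat) \<Rightarrow> real" where "c1 = (\<lambda>\<beta>. if \<beta> = (\<lambda>_. 0) then 1 else 0)"
    have m0: "mono x (\<lambda>_. 0) = 1" for x :: "real^'n" unfolding mono_def by simp
    have r1: "pseries_rep c1 (\<lambda>x::real^'n. 1 * mono x (\<lambda>_. 0))" unfolding c1_def by (rule pseries_rep_mono)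
    have one: "(\<lambda>x::real^'n. 1 * mono x (\<lambda>_. 0)) = (\<lambda>x. 1)" using m0 by simp
    have r1': "pseries_rep c1 (\<lambda>x::real^'n. 1)" using r1 unfolding one .
    have md0: "mdeg (\<lambda>_::'n. 0::nat) = 0" unfolding mdeg_def by simp
    have S: "{\<alpha>. \<alpha> > 0 \<and> \<not> loc_integrable0 (\<lambda>x. 1 / \<bar>f x\<bar> powr \<alpha>)} = {real n / real d..}"
    proof (intro set_eqI)
      fix \<alpha> :: real
      show "\<alpha> \<in> {\<alpha>. \<alpha> > 0 \<and> \<not> loc_integrable0 (\<lambda>x. 1 / \<bar>f x\<bar> powr \<alpha>)} \<longleftrightarrow> \<alpha> \<in> {real n / real d..}"
      proof (cases "\<alpha> > 0")
        case False
        moreover have "real n / real d > 0" using n1 dr by simp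
        ultimately show ?thesis by auto
      next
        case True
        have K: "loc_integrable0 (\<lambda>x. \<bar>1\<bar> / \<bar>f x\<bar> powr \<alpha>) \<longleftrightarrow>
              (\<forall>\<beta>::'n\<Rightarrow>nat. real (mdeg \<beta>) \<le> \<alpha> * real d - real CARD('n) \<longrightarrow> c1 \<beta> = 0)"
          by (rule key[OF rep lower_zero simple f0 dpos r1' True])
        have "(\<forall>\<beta>::'n\<Rightarrow>nat. real (mdeg \<beta>) \<le> \<alpha> * real d - real CARD('n) \<longrightarrow> c1 \<beta> = 0) \<longleftrightarrow>
               \<not> (0 \<le> \<alpha> * real d - real n)"
        proof
          assume "\<forall>\<beta>::'n\<Rightarrow>nat. real (mdeg \<beta>) \<le> \<alpha> * real d - real CARD('n) \<longrightarrow> c1 \<beta> = 0"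
          then have "real (mdeg (\<lambda>_::'n. 0::nat)) \<le> \<alpha> * real d - real n \<longrightarrow> c1 (\<lambda>_. 0) = 0"
            unfolding n_def by blast
          then show "\<not> (0 \<le> \<alpha> * real d - real n)" unfolding md0 c1_def by simp
        next
          assume "\<not> (0 \<le> \<alpha> * real d - real n)"
          then show "\<forall>\<beta>::'n\<Rightarrow>nat. real (mdeg \<beta>) \<le> \<alpha> * real d - real CARD('n) \<longrightarrow> c1 \<beta> = 0"
            unfolding n_def by auto
        qed
        moreover have "(0 \<le> \<alpha> * real d - real n) \<longleftrightarrow> real n / real d \<le> \<alpha>"
          using dr by (simp add: field_simps)
        ultimately show ?thesis using K True by auto
      qed
    qed
    show ?thesis unfolding rlct_def S n_def by simp
  qed
  show ?thesis using part1 part2 part3 by blast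
qed


end
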